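(* Let $K$ be the field of fractions of a complete discrete valuation ring $\mathcal{O}$. In the coefficient-choosing game of degree $d = 4$ over $K$, if Nora makes the last move then Nora has a winning strategy.
   Context: The coefficient-choosing game of degree $d$ over $K$: Nora and Wanda alternately choose coefficients of $f(x) = a_d x^d + \cdots + a_0$; on each move the current player picks a not-yet-chosen coefficient and assigns it a value in $K$, subject to $a_d \neq 0$, $a_0 \neq 0$. After all $d+1$ coefficients are chosen, Wanda wins if $f$ has a root in $K$, and Nora wins otherwise. *)

theory Defs
  imports "HOL-Computational_Algebra.Polynomial"
begin

text \<open>A normalized discrete valuation on a field K, given on nonzero elements
  (v 0 = +infinity is implicit: all conditions are only imposed on nonzero elements).
  The valuation ring O = {x. x = 0 or v x \<ge> 0} is then a DVR with fraction field K.\<close>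
definition discrete_valuation :: "('a::field \<Rightarrow> int) \<Rightarrow> bool" where
  "discrete_valuation v \<longleftrightarrow>
     (\<forall>x y. x \<noteq> 0 \<longrightarrow> y \<noteq> 0 \<longrightarrow> v (x * y) = v x + v y) \<and>
     (\<forall>x y. x \<noteq> 0 \<longrightarrow> y \<noteq> 0 \<longrightarrow> x + y \<noteq> 0 \<longrightarrow> v (x + y) \<ge> min (v x) (v y)) \<and>
     (\<forall>n::int. \<exists>x. x \<noteq> 0 \<and> v x = n)"

definition v_close :: "('a::field \<Rightarrow> int) \<Rightarrow> int \<Rightarrow> 'a \<Rightarrow> 'a \<Rightarrow> bool" where
  "v_close v N x y \<longleftrightarrow> x = y \<or> v (x - y) \<ge> N"

definition v_complete :: "('a::field \<Rightarrow> int) \<Rightarrow> bool" where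
  "v_complete v \<longleftrightarrow>
     (\<forall>s :: nat \<Rightarrow> 'a.
        (\<forall>N. \<exists>M. \<forall>m n. M \<le> m \<longrightarrow> M \<le> n \<longrightarrow> v_close v N (s m) (s n)) \<longrightarrow>
        (\<exists>L. \<forall>N. \<exists>M. \<forall>n. M \<le> n \<longrightarrow> v_close v N (s n) L))"

text \<open>Coefficient-choosing game of degree d. A state assigns to some of the indices
  0..d a chosen coefficient (None = not yet chosen).\<close>
definition legal_move :: "nat \<Rightarrow> (nat \<Rightarrow> 'a::field option) \<Rightarrow> nat \<Rightarrow> 'a \<Rightarrow> bool" where
  "legal_move d s i c \<longleftrightarrow> i \<le> d \<and> s i = None \<and> ((i = d \<or> i = 0) \<longrightarrow> c \<noteq> 0)"

definition final_poly :: "nat \<Rightarrow> (nat \<Rightarrow> 'a::field option) \<Rightarrow> 'a poly" where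
  "final_poly d s = (\<Sum>i\<le>d. monom (the (s i)) i)"

fun nora_wins :: "nat \<Rightarrow> nat \<Rightarrow> bool \<Rightarrow> (nat \<Rightarrow> 'a::field option) \<Rightarrow> bool" where
  "nora_wins d 0 t s = (\<not> (\<exists>x. poly (final_poly d s) x = 0))"
| "nora_wins d (Suc k) t s =
     (if t then (\<exists>i c. legal_move d s i c \<and> nora_wins d k False (s(i := Some c)))
      else (\<forall>i c. legal_move d s i c \<longrightarrow> nora_wins d k True (s(i := Some c))))"

definition nora_has_winning_strategy :: "'a::field itself \<Rightarrow> nat \<Rightarrow> bool \<Rightarrow> bool" where
  "nora_has_winning_strategy _ d nora_first =
     nora_wins d (Suc d) nora_first (\<lambda>_. None :: 'a option)"

text \<open>There are d+1 moves, alternating; Nora makes the last move iff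
  (Nora moves first iff d+1 is odd).\<close>
definition nora_makes_last_move :: "nat \<Rightarrow> bool \<Rightarrow> bool" where
  "nora_makes_last_move d nora_first \<longleftrightarrow> (nora_first \<longleftrightarrow> odd (Suc d))"

end

theory Submission
  imports Defs
begin

lemma dv_mult: "discrete_valuation v \<Longrightarrow> x \<noteq> 0 \<Longrightarrow> y \<noteq> 0 \<Longrightarrow> v (x*y) = v x + v y"
  unfolding discrete_valuation_def by blast
lemma dv_add: "discrete_valuation v \<Longrightarrow> x \<noteq> 0 \<Longrightarrow> y \<noteq> 0 \<Longrightarrow> x + y \<noteq> 0 \<Longrightarrow> min (v x) (v y) \<le> v (x+y)"
  unfolding discrete_valuation_def by blast
lemma dv_surj: "discrete_valuation v \<Longrightarrow> \<exists>x. x \<noteq> 0 \<and> v x = n"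
  unfolding discrete_valuation_def by blast
lemma dv_one: "discrete_valuation v \<Longrightarrow> v 1 = 0"
  using dv_mult[of v 1 1] by simp
lemma dv_neg: assumes "discrete_valuation v" "x \<noteq> 0" shows "v (-x) = v x"
proof -
  have "v ((-1) * (-1)) = v (-1) + v (-1)" using dv_mult[OF assms(1), of "-1" "-1"] by simp
  hence "v (-1) = 0" using dv_one[OF assms(1)] by simp
  thus ?thesis using dv_mult[OF assms(1), of "-1" x] assms(2) by simp
qed
lemma dv_pow: assumes "discrete_valuation v" "x \<noteq> 0" shows "v (x^n) = int n * v x"
  by (induction n) (auto simp: dv_one[OF assms(1)] dv_mult[OF assms(1)] assms(2) algebra_simps)

lemma dom_sum_aux: assumes "discrete_valuation v" "\<forall>z\<in>set zs. z = 0 \<or> v y < v z"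
  shows "sum_list zs = 0 \<or> v y < v (sum_list zs)"
  using assms(2)
proof (induction zs)
  case Nil then show ?case by simp
next
  case (Cons z zs)
  then have IH: "sum_list zs = 0 \<or> v y < v (sum_list zs)" and hz: "z = 0 \<or> v y < v z" by auto
  show ?case
  proof (cases "z = 0 \<or> sum_list zs = 0 \<or> z + sum_list zs = 0")
    case True then show ?thesis using IH hz by auto
  next
    case False
    then have "min (v z) (v (sum_list zs)) \<le> v (z + sum_list zs)" using dv_add[OF assms(1)] by blast
    then show ?thesis using IH hz False by auto
  qed
qed

lemma dom_sum: assumes "discrete_valuation v" "y \<noteq> 0" "\<forall>z\<in>set zs. z = 0 \<or> v y < v z"
  shows "y + sum_list zs \<noteq> 0"
proof
  assume h: "y + sum_list zs = 0"
  then have "sum_list zs = -y" by (simp add: eq_neg_iff_add_eq_0 add.commute)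
  then show False using dom_sum_aux[OF assms(1,3)] assms(2) dv_neg[OF assms(1,2)] by auto
qed

lemma poly_final4: "poly (final_poly 4 s) x = the (s 0) + the (s 1) * x + the (s 2) * x^2 + the (s 3) * x^3 + the (s 4) * x^4"
  by (simp add: final_poly_def poly_sum poly_monom eval_nat_numeral)

lemma dv_term: assumes "discrete_valuation v" "a \<noteq> 0" "x \<noteq> 0" shows "v (a * x^i) = v a + int i * v x"
  using dv_mult[OF assms(1) assms(2)] dv_pow[OF assms(1,3)] assms by simp

lemma arith0:
  fixes n s v1 v2 v3 v4 :: int
  assumes "n = v4 + 1 - 4 * (\<bar>v1\<bar> + \<bar>v2\<bar> + \<bar>v3\<bar> + \<bar>v4\<bar> + 1)"
  shows "(n < v1 + s \<and> n < v2 + 2*s \<and> n < v3 + 3*s \<and> n < v4 + 4*s) \<or>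
         (v4 + 4*s < n \<and> v4 + 4*s < v1 + s \<and> v4 + 4*s < v2 + 2*s \<and> v4 + 4*s < v3 + 3*s)"
proof -
  define K where "K = \<bar>v1\<bar> + \<bar>v2\<bar> + \<bar>v3\<bar> + \<bar>v4\<bar> + 1"
  have n: "n = v4 + 1 - 4*K" using assms K_def by simp
  have k: "v1 - v4 < K" "v4 - v1 < K" "v2 - v4 < K" "v4 - v2 < K" "v3 - v4 < K" "v4 - v3 < K" "v4 < K" "-v4 < K"
    unfolding K_def by arith+
  show ?thesis
  proof (cases "4*s < n - v4")
    case True
    then have "4*s \<le> n - v4 - 1" by simp
    then show ?thesis using n k by linarith
  next
    case False
    have "4*s \<noteq> n - v4"
    proof
      assume "4*s = n - v4"
      then have "4*(s+K) = 1" using n by simp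
      then show False by presburger
    qed
    then have "4*s \<ge> n - v4 + 1" using False by simp
    then show ?thesis using n k by linarith
  qed
qed

lemma P0: fixes v :: "'a::field \<Rightarrow> int" and a0 a1 a2 a3 a4 :: 'a
  assumes dv: "discrete_valuation v" and a4: "a4 \<noteq> 0"
  shows "\<exists>a0. a0 \<noteq> 0 \<and> (\<forall>x. a0 + a1*x + a2*x^2 + a3*x^3 + a4*x^4 \<noteq> 0)"
proof -
  define n where "n = v a4 + 1 - 4 * (\<bar>v a1\<bar> + \<bar>v a2\<bar> + \<bar>v a3\<bar> + \<bar>v a4\<bar> + 1)"
  obtain a0 where a0: "a0 \<noteq> 0" "v a0 = n" using dv_surj[OF dv] by blast
  have "a0 + a1*x + a2*x^2 + a3*x^3 + a4*x^4 \<noteq> 0" for x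
  proof (cases "x = 0")
    case True then show ?thesis using a0 by simp
  next
    case x: False
    have t: "b \<noteq> 0 \<Longrightarrow> v (b * x^i) = v b + int i * v x" for b i using dv_term[OF dv _ x] by blast
    have t1: "b \<noteq> 0 \<Longrightarrow> v (b * x) = v b + v x" for b using t[of b 1] by simp
    from arith0[OF n_def, of "v x"] show ?thesis
    proof
      assume h: "n < v a1 + v x \<and> n < v a2 + 2 * v x \<and> n < v a3 + 3 * v x \<and> n < v a4 + 4 * v x"
      have "a0 + sum_list [a1*x, a2*x^2, a3*x^3, a4*x^4] \<noteq> 0"
        apply (rule dom_sum[OF dv a0(1)])
        using h a0(2) t1 t[of _ 2] t[of _ 3] t[of _ 4] a4 x by (cases "a1 = 0"; cases "a2 = 0"; cases "a3 = 0"; auto)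
      then show ?thesis by (simp add: algebra_simps)
    next
      assume h: "v a4 + 4 * v x < n \<and> v a4 + 4 * v x < v a1 + v x \<and> v a4 + 4 * v x < v a2 + 2 * v x \<and> v a4 + 4 * v x < v a3 + 3 * v x"
      have "a4*x^4 + sum_list [a0, a1*x, a2*x^2, a3*x^3] \<noteq> 0"
        apply (rule dom_sum[OF dv])
        using a4 x apply simp
        using h a0 t1 t[of _ 2] t[of _ 3] t[of _ 4] a4 x by (cases "a1 = 0"; cases "a2 = 0"; cases "a3 = 0"; auto)
      then show ?thesis by (simp add: algebra_simps)
    qed
  qed
  then show ?thesis using a0 by blast
qed

lemma P4: fixes v :: "'a::field \<Rightarrow> int" and a0 a1 a2 a3 a4 :: 'a
  assumes dv: "discrete_valuation v" and a0: "a0 \<noteq> 0"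
  shows "\<exists>a4. a4 \<noteq> 0 \<and> (\<forall>x. a0 + a1*x + a2*x^2 + a3*x^3 + a4*x^4 \<noteq> 0)"
proof -
  obtain b where b: "b \<noteq> 0" "\<forall>y. b + a3*y + a2*y^2 + a1*y^3 + a0*y^4 \<noteq> 0"
    using P0[OF dv a0] by blast
  have "a0 + a1*x + a2*x^2 + a3*x^3 + b*x^4 \<noteq> 0" for x
  proof (cases "x = 0")
    case True then show ?thesis using a0 by simp
  next
    case False
    have "b + a3*(1/x) + a2*(1/x)^2 + a1*(1/x)^3 + a0*(1/x)^4 \<noteq> 0" using b by blast
    then have h1: "(b + a3*(1/x) + a2*(1/x)^2 + a1*(1/x)^3 + a0*(1/x)^4) * x^4 \<noteq> 0" using False by simp
    have h2: "(b + a3*(1/x) + a2*(1/x)^2 + a1*(1/x)^3 + a0*(1/x)^4) * x^4 = a0 + a1*x + a2*x^2 + a3*x^3 + b*x^4"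
      using False by (simp add: field_simps eval_nat_numeral)
    show ?thesis using h1 h2 by metis
  qed
  then show ?thesis using b by blast
qed

lemma arith2:
  fixes s v0 v4 t :: int
  assumes "even (v0 - v4)" "t = min v0 v4 - 1"
  shows "(v0 < t + 2*s \<and> v0 < v4 + 4*s) \<or> (t + 2*s < v0 \<and> t + 2*s < v4 + 4*s) \<or>
         (v4 + 4*s < v0 \<and> v4 + 4*s < t + 2*s)"
  using assms by presburger

lemma P2: fixes v :: "'a::field \<Rightarrow> int" and a0 a1 a2 a3 a4 :: 'a
  assumes dv: "discrete_valuation v" and a0: "a0 \<noteq> 0" and a4: "a4 \<noteq> 0"
  shows "\<exists>a2. \<forall>x. a0 + 0*x + a2*x^2 + 0*x^3 + a4*x^4 \<noteq> 0"
proof (cases "even (v a0 - v a4)")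
  case False
  have "a0 + a4*x^4 \<noteq> 0" for x
  proof
    assume h: "a0 + a4*x^4 = 0"
    then have x: "x \<noteq> 0" using a0 by auto
    have "a4 * x^4 = - a0" using h by (simp add: eq_neg_iff_add_eq_0 add.commute)
    then have "v a4 + 4 * v x = v a0" using dv_term[OF dv a4 x, of 4] dv_neg[OF dv a0] by simp
    then show False using False by presburger
  qed
  then show ?thesis by (intro exI[of _ 0]) simp
next
  case True
  obtain a2 where a2: "a2 \<noteq> 0" "v a2 = min (v a0) (v a4) - 1" using dv_surj[OF dv] by blast
  have "a0 + a2*x^2 + a4*x^4 \<noteq> 0" for x
  proof (cases "x = 0")
    case True then show ?thesis using a0 by simp
  next
    case x: False
    have t: "b \<noteq> 0 \<Longrightarrow> v (b * x^i) = v b + int i * v x" for b i using dv_term[OF dv _ x] by blast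
    from arith2[OF True a2(2), of "v x"] show ?thesis
    proof (elim disjE)
      assume h: "v a0 < v a2 + 2 * v x \<and> v a0 < v a4 + 4 * v x"
      have "a0 + sum_list [a2*x^2, a4*x^4] \<noteq> 0"
        apply (rule dom_sum[OF dv a0])
        using h t[of _ 2] t[of _ 4] a2 a4 by auto
      then show ?thesis by (simp add: algebra_simps)
    next
      assume h: "v a2 + 2 * v x < v a0 \<and> v a2 + 2 * v x < v a4 + 4 * v x"
      have "a2*x^2 + sum_list [a0, a4*x^4] \<noteq> 0"
        apply (rule dom_sum[OF dv])
        using h t[of _ 2] t[of _ 4] a2 a4 x by auto
      then show ?thesis by (simp add: algebra_simps)
    next
      assume h: "v a4 + 4 * v x < v a0 \<and> v a4 + 4 * v x < v a2 + 2 * v x"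
      have "a4*x^4 + sum_list [a0, a2*x^2] \<noteq> 0"
        apply (rule dom_sum[OF dv])
        using h t[of _ 2] t[of _ 4] a2 a4 x by auto
      then show ?thesis by (simp add: algebra_simps)
    qed
  qed
  then show ?thesis by (intro exI[of _ a2]) simp
qed

lemma fin0: "nora_wins 4 0 t s \<longleftrightarrow> (\<forall>x. the (s 0) + the (s 1) * x + the (s 2) * x^2 + the (s 3) * x^3 + the (s 4) * x^4 \<noteq> 0)"
  by (simp add: poly_final4)

lemma last0: fixes v :: "'a::field \<Rightarrow> int" and s :: "nat \<Rightarrow> 'a option"
  assumes dv: "discrete_valuation v" and "s 0 = None" "s 1 = Some a1" "s 2 = Some a2" "s 3 = Some a3" "s 4 = Some a4" "a4 \<noteq> 0"
  shows "nora_wins 4 (Suc 0) True s"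
proof -
  obtain a0 where a0: "a0 \<noteq> 0" "\<forall>x. a0 + a1*x + a2*x^2 + a3*x^3 + a4*x^4 \<noteq> 0" using P0[OF dv assms(7)] by blast
  have "legal_move 4 s 0 a0" using assms a0 by (simp add: legal_move_def)
  moreover have "nora_wins 4 0 False (s(0 := Some a0))" unfolding fin0 using assms a0 by simp
  ultimately show ?thesis by auto
qed

lemma last4: fixes v :: "'a::field \<Rightarrow> int" and s :: "nat \<Rightarrow> 'a option"
  assumes dv: "discrete_valuation v" and "s 4 = None" "s 1 = Some a1" "s 2 = Some a2" "s 3 = Some a3" "s 0 = Some a0" "a0 \<noteq> 0"
  shows "nora_wins 4 (Suc 0) True s"
proof -
  obtain a4 where a4: "a4 \<noteq> 0" "\<forall>x. a0 + a1*x + a2*x^2 + a3*x^3 + a4*x^4 \<noteq> 0" using P4[OF dv assms(7)] by blast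
  have "legal_move 4 s 4 a4" using assms a4 by (simp add: legal_move_def)
  moreover have "nora_wins 4 0 False (s(4 := Some a4))" unfolding fin0 using assms a4 by simp
  ultimately show ?thesis by auto
qed

lemma last2: fixes v :: "'a::field \<Rightarrow> int" and s :: "nat \<Rightarrow> 'a option"
  assumes dv: "discrete_valuation v" and "s 2 = None" "s 1 = Some 0" "s 3 = Some 0" "s 0 = Some a0" "a0 \<noteq> 0" "s 4 = Some a4" "a4 \<noteq> 0"
  shows "nora_wins 4 (Suc 0) True s"
proof -
  obtain a2 where a2: "\<forall>x. a0 + 0*x + a2*x^2 + 0*x^3 + a4*x^4 \<noteq> 0" using P2[OF dv assms(6,8)] by blast
  have "legal_move 4 s 2 a2" using assms by (simp add: legal_move_def)
  moreover have "nora_wins 4 0 False (s(2 := Some a2))" unfolding fin0 using assms a2 by simp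
  ultimately show ?thesis by auto
qed

lemma legal_cases: "legal_move 4 s i c \<Longrightarrow> (i = 0 \<and> s 0 = None \<and> c \<noteq> 0) \<or> (i = 1 \<and> s 1 = None) \<or> (i = 2 \<and> s 2 = None)
   \<or> (i = 3 \<and> s 3 = None) \<or> (i = 4 \<and> s 4 = None \<and> c \<noteq> 0)"
proof -
  assume h: "legal_move 4 s i c"
  then have "i \<in> {0,1,2,3,4}" unfolding legal_move_def by auto
  then show ?thesis using h unfolding legal_move_def by auto
qed

lemma W_ends: fixes v :: "'a::field \<Rightarrow> int" and s :: "nat \<Rightarrow> 'a option"
  assumes dv: "discrete_valuation v" and "s 0 = None" "s 4 = None" "s 1 = Some b1" "s 2 = Some b2" "s 3 = Some b3"
  shows "nora_wins 4 (Suc (Suc 0)) False s"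
proof -
  have "nora_wins 4 (Suc 0) True (s(i := Some c))" if "legal_move 4 s i c" for i c
    using legal_cases[OF that] assms last4[OF dv, of "s(i := Some c)"] last0[OF dv, of "s(i := Some c)"] by auto
  then show ?thesis by simp
qed

lemma W_mid0: fixes v :: "'a::field \<Rightarrow> int" and s :: "nat \<Rightarrow> 'a option"
  assumes dv: "discrete_valuation v" and "s 1 = Some 0" "s 3 = Some 0" "s 0 = Some a0" "a0 \<noteq> 0" "s 2 = None" "s 4 = None"
  shows "nora_wins 4 (Suc (Suc 0)) False s"
proof -
  have "nora_wins 4 (Suc 0) True (s(i := Some c))" if "legal_move 4 s i c" for i c
    using legal_cases[OF that] assms last4[OF dv, of "s(i := Some c)"] last2[OF dv, of "s(i := Some c)"] by auto
  then show ?thesis by simp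
qed

lemma W_mid2: fixes v :: "'a::field \<Rightarrow> int" and s :: "nat \<Rightarrow> 'a option"
  assumes dv: "discrete_valuation v" and "s 1 = Some 0" "s 3 = Some 0" "s 2 = Some a2" "s 0 = None" "s 4 = None"
  shows "nora_wins 4 (Suc (Suc 0)) False s"
proof -
  have "nora_wins 4 (Suc 0) True (s(i := Some c))" if "legal_move 4 s i c" for i c
    using legal_cases[OF that] assms last4[OF dv, of "s(i := Some c)"] last0[OF dv, of "s(i := Some c)"] by auto
  then show ?thesis by simp
qed

lemma W_mid4: fixes v :: "'a::field \<Rightarrow> int" and s :: "nat \<Rightarrow> 'a option"
  assumes dv: "discrete_valuation v" and "s 1 = Some 0" "s 3 = Some 0" "s 4 = Some a4" "a4 \<noteq> 0" "s 2 = None" "s 0 = None"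
  shows "nora_wins 4 (Suc (Suc 0)) False s"
proof -
  have "nora_wins 4 (Suc 0) True (s(i := Some c))" if "legal_move 4 s i c" for i c
    using legal_cases[OF that] assms last0[OF dv, of "s(i := Some c)"] last2[OF dv, of "s(i := Some c)"] by auto
  then show ?thesis by simp
qed

lemma W_first: fixes v :: "'a::field \<Rightarrow> int"
  assumes dv: "discrete_valuation v"
  shows "nora_wins 4 (Suc (Suc (Suc (Suc 0)))) False ((\<lambda>_. None :: 'a option)(1 := Some 0))"
proof -
  let ?s = "(\<lambda>_. None :: 'a option)(1 := Some 0)"
  have "nora_wins 4 (Suc (Suc (Suc 0))) True (?s(i := Some c))" if "legal_move 4 ?s i c" for i c
  proof -
    from legal_cases[OF that] consider "i = 0" "c \<noteq> 0" | "i = 2" | "i = 3" | "i = 4" "c \<noteq> 0" by auto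
    then show ?thesis
    proof cases
      case 1
      let ?t = "?s(i := Some c, 3 := Some 0)"
      have "legal_move 4 (?s(i := Some c)) 3 0" using 1 by (simp add: legal_move_def)
      moreover have "nora_wins 4 (Suc (Suc 0)) False ?t" by (rule W_mid0[OF dv, of _ c]) (use 1 in auto)
      ultimately show ?thesis by auto
    next
      case 2
      let ?t = "?s(i := Some c, 3 := Some 0)"
      have "legal_move 4 (?s(i := Some c)) 3 0" using 2 by (simp add: legal_move_def)
      moreover have "nora_wins 4 (Suc (Suc 0)) False ?t" by (rule W_mid2[OF dv, of _ c]) (use 2 in auto)
      ultimately show ?thesis by auto
    next
      case 3
      let ?t = "?s(i := Some c, 2 := Some 0)"
      have "legal_move 4 (?s(i := Some c)) 2 0" using 3 by (simp add: legal_move_def)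
      moreover have "nora_wins 4 (Suc (Suc 0)) False ?t" by (rule W_ends[OF dv, of _ 0 0 c]) (use 3 in auto)
      ultimately show ?thesis by auto
    next
      case 4
      let ?t = "?s(i := Some c, 3 := Some 0)"
      have "legal_move 4 (?s(i := Some c)) 3 0" using 4 by (simp add: legal_move_def)
      moreover have "nora_wins 4 (Suc (Suc 0)) False ?t" by (rule W_mid4[OF dv, of _ c]) (use 4 in auto)
      ultimately show ?thesis by auto
    qed
  qed
  then show ?thesis by simp
qed

theorem proposition1:
  fixes v :: "'a::field \<Rightarrow> int" and nora_first :: bool
  assumes "discrete_valuation v"
    and "v_complete v"
    and "nora_makes_last_move 4 nora_first"
  shows "nora_has_winning_strategy TYPE('a) 4 nora_first"
proof -
  have nf: nora_first using assms(3) by (simp add: nora_makes_last_move_def)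
  have "legal_move 4 (\<lambda>_. None :: 'a option) 1 0" by (simp add: legal_move_def)
  then have "nora_wins 4 (Suc (Suc (Suc (Suc (Suc 0))))) True (\<lambda>_. None :: 'a option)"
    using W_first[OF assms(1)] by (simp only: nora_wins.simps(2) if_True) blast
  then show ?thesis using nf by (simp add: nora_has_winning_strategy_def numeral_eq_Suc)
qed

end
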